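(* Let $\Gamma$ be a distance-regular graph with diameter $D\ge 3$, and let $\sigma_0,\dots,\sigma_D$ and $\rho_0,\dots,\rho_D$ be pseudo cosine sequences of $\Gamma$, with $\sigma=\sigma_1$, $\rho=\rho_1$. Then $$(\sigma-\rho)\sum_{h=0}^{i}k_h\sigma_h\rho_h=\frac{b_1b_2\cdots b_i}{c_1c_2\cdots c_i}\,(\sigma_{i+1}\rho_i-\sigma_i\rho_{i+1})\qquad(0\le i\le D-1).$$
   Context: $\Gamma$ is a finite connected undirected graph without loops or multiple edges, distance-regular with diameter $D$, intersection numbers $a_i,b_i,c_i$ ($c_0=0$, $b_D=0$), valency $k=b_0$, $c_i+a_i+b_i=k$, and $k_h=\frac{b_0b_1\cdots b_{h-1}}{c_1c_2\cdots c_h}$ (the number of vertices at distance $h$ from a given vertex). For $\theta\in\mathbb{R}$ the pseudo cosine sequence for $\theta$ is the sequence of reals $\sigma_0,\dots,\sigma_D$ with $\sigma_0=1$ and $c_i\sigma_{i-1}+a_i\sigma_i+b_i\sigma_{i+1}=\theta\sigma_i$ for $0\le i\le D-1$; then $\theta=k\sigma_1$. *)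

theory Defs
  imports Complex_Main
begin

definition gdist :: "('v \<Rightarrow> 'v \<Rightarrow> bool) \<Rightarrow> 'v \<Rightarrow> 'v \<Rightarrow> nat" where
  "gdist E x y = (LEAST n. (E ^^ n) x y)"

definition simple_connected_graph :: "'v set \<Rightarrow> ('v \<Rightarrow> 'v \<Rightarrow> bool) \<Rightarrow> bool" where
  "simple_connected_graph V E \<longleftrightarrow>
     finite V \<and> V \<noteq> {} \<and>
     (\<forall>x y. E x y \<longrightarrow> x \<in> V \<and> y \<in> V) \<and>
     (\<forall>x y. E x y \<longrightarrow> E y x) \<and>
     (\<forall>x. \<not> E x x) \<and>
     (\<forall>x\<in>V. \<forall>y\<in>V. \<exists>n. (E ^^ n) x y)"

definition diameter :: "'v set \<Rightarrow> ('v \<Rightarrow> 'v \<Rightarrow> bool) \<Rightarrow> nat" where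
  "diameter V E = Max {gdist E x y | x y. x \<in> V \<and> y \<in> V}"

text \<open>Distance-regular graph with diameter D and intersection numbers a_h, b_h, c_h
  (for 0 \<le> h \<le> D): for all x, y at distance h, y has exactly c_h neighbours at
  distance h-1 from x, a_h at distance h, b_h at distance h+1.
  (For h = 0 the set for c_0 is empty, so c_0 = 0; b_D = 0 likewise.)\<close>

definition distance_regular ::
  "'v set \<Rightarrow> ('v \<Rightarrow> 'v \<Rightarrow> bool) \<Rightarrow> nat \<Rightarrow> (nat \<Rightarrow> nat) \<Rightarrow> (nat \<Rightarrow> nat) \<Rightarrow> (nat \<Rightarrow> nat) \<Rightarrow> bool" where
  "distance_regular V E D a b c \<longleftrightarrow>
     simple_connected_graph V E \<and> D = diameter V E \<and>
     (\<forall>x\<in>V. \<forall>y\<in>V. \<forall>h\<le>D. gdist E x y = h \<longrightarrow>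
        (c h = card {z\<in>V. E y z \<and> (0 < h \<and> gdist E x z = h - 1)} \<and>
         a h = card {z\<in>V. E y z \<and> gdist E x z = h} \<and>
         b h = card {z\<in>V. E y z \<and> gdist E x z = h + 1}))"

definition kh :: "(nat \<Rightarrow> nat) \<Rightarrow> (nat \<Rightarrow> nat) \<Rightarrow> nat \<Rightarrow> real" where
  "kh b c h = (\<Prod>j<h. real (b j)) / (\<Prod>j=1..h. real (c j))"

text \<open>Pseudo cosine sequence for theta: sigma_0 = 1 and
  c_i sigma_{i-1} + a_i sigma_i + b_i sigma_{i+1} = theta sigma_i for 0 \<le> i \<le> D-1
  (with c_0 = 0 the term sigma_{-1} is irrelevant).\<close>
definition pseudo_cosine_seq ::
  "nat \<Rightarrow> (nat \<Rightarrow> nat) \<Rightarrow> (nat \<Rightarrow> nat) \<Rightarrow> (nat \<Rightarrow> nat) \<Rightarrow> real \<Rightarrow> (nat \<Rightarrow> real) \<Rightarrow> bool" where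
  "pseudo_cosine_seq D a b c \<theta> \<sigma> \<longleftrightarrow>
     \<sigma> 0 = 1 \<and>
     (\<forall>i. i + 1 \<le> D \<longrightarrow>
        real (c i) * (if i = 0 then 0 else \<sigma> (i - 1)) + real (a i) * \<sigma> i + real (b i) * \<sigma> (i + 1)
          = \<theta> * \<sigma> i)"

end

theory Submission
  imports Defs
begin

lemma gd_self:
  "gdist E x x = 0"
  unfolding gdist_def by (rule Least_eq_0) simp

lemma gd_holds:
  assumes "simple_connected_graph V E" "x \<in> V" "y \<in> V"
  shows "(E ^^ gdist E x y) x y"
proof -
  obtain n where "(E ^^ n) x y" using assms unfolding simple_connected_graph_def by blast
  then show ?thesis unfolding gdist_def by (rule LeastI)
qed

lemma gd_le:
  "(E ^^ n) x y \<Longrightarrow> gdist E x y \<le> n"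
  unfolding gdist_def by (rule Least_le)

lemma gd_pred:
  assumes g: "simple_connected_graph V E" and xy: "x \<in> V" "y \<in> V"
    and d: "gdist E x y = Suc m"
  shows "\<exists>w\<in>V. E y w \<and> gdist E x w = m"
proof -
  have "(E ^^ Suc m) x y" using gd_holds[OF g xy] d by simp
  then obtain w where w1: "(E ^^ m) x w" and w2: "E w y" by auto
  have wV: "w \<in> V" using g w2 unfolding simple_connected_graph_def by blast
  have "E y w" using g w2 unfolding simple_connected_graph_def by blast
  moreover have "gdist E x w = m"
  proof (rule ccontr)
    assume ne: "gdist E x w \<noteq> m"
    have le: "gdist E x w \<le> m" using gd_le[OF w1] .
    have "(E ^^ gdist E x w) x w" using gd_holds[OF g xy(1) wV] .
    then have "(E ^^ Suc (gdist E x w)) x y" using w2 by auto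
    then have "gdist E x y \<le> Suc (gdist E x w)" by (rule gd_le)
    then show False using d le ne by simp
  qed
  ultimately show ?thesis using wV by blast
qed

lemma gd_down:
  assumes g: "simple_connected_graph V E" and x: "x \<in> V"
  shows "y \<in> V \<Longrightarrow> gdist E x y = d \<Longrightarrow> h \<le> d \<Longrightarrow> \<exists>w\<in>V. gdist E x w = h"
proof (induction d arbitrary: y)
  case 0 then show ?case by auto
next
  case (Suc d)
  show ?case
  proof (cases "h = Suc d")
    case True then show ?thesis using Suc by blast
  next
    case False
    obtain w where "w \<in> V" "gdist E x w = d" using gd_pred[OF g x Suc.prems(1,2)] by blast
    then show ?thesis using Suc False by auto
  qed
qed

lemma c_pos:
  assumes dr: "distance_regular V E D a b c" and h: "1 \<le> h" "h \<le> D"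
  shows "c h > 0"
proof -
  have g: "simple_connected_graph V E" using dr unfolding distance_regular_def by blast
  have DD: "D = diameter V E" using dr unfolding distance_regular_def by blast
  let ?S = "{gdist E x y | x y. x \<in> V \<and> y \<in> V}"
  have fin: "finite ?S"
  proof -
    have "?S = (\<lambda>(x,y). gdist E x y) ` (V \<times> V)" by auto
    then show ?thesis using g unfolding simple_connected_graph_def by simp
  qed
  have ne: "?S \<noteq> {}" using g unfolding simple_connected_graph_def by blast
  have "D \<in> ?S" using Max_in[OF fin ne] DD unfolding diameter_def by simp
  then obtain x y where xy: "x \<in> V" "y \<in> V" "gdist E x y = D" by blast
  obtain w where w: "w \<in> V" "gdist E x w = h" using gd_down[OF g xy(1) xy(2,3) h(2)] by blast
  obtain m where m: "h = Suc m" using h by (cases h) auto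
  obtain z where z: "z \<in> V" "E w z" "gdist E x z = m" using gd_pred[OF g xy(1) w(1)] w m by blast
  have cc: "c h = card {z\<in>V. E w z \<and> (0 < h \<and> gdist E x z = h - 1)}"
    using dr xy(1) w h unfolding distance_regular_def by blast
  have "finite V" using g unfolding simple_connected_graph_def by blast
  moreover have zin: "z \<in> {z\<in>V. E w z \<and> (0 < h \<and> gdist E x z = h - 1)}" using z m by auto
  ultimately have "card {z\<in>V. E w z \<and> (0 < h \<and> gdist E x z = h - 1)} > 0"
  proof -
    have "finite {z\<in>V. E w z \<and> (0 < h \<and> gdist E x z = h - 1)}" using \<open>finite V\<close> by simp
    then show ?thesis using card_gt_0_iff zin by blast
  qed
  then show ?thesis using cc by simp
qed

lemma a0:
  assumes dr: "distance_regular V E D a b c"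
  shows "a 0 = 0"
proof -
  have g: "simple_connected_graph V E" using dr unfolding distance_regular_def by blast
  obtain x where x: "x \<in> V" using g unfolding simple_connected_graph_def by blast
  have aa: "a 0 = card {z\<in>V. E x z \<and> gdist E x z = 0}"
    using dr x gd_self[of E x] unfolding distance_regular_def by fastforce
  have emp: "{z\<in>V. E x z \<and> gdist E x z = 0} = {}"
  proof safe
    fix z assume z: "z \<in> V" "E x z" "gdist E x z = 0"
    have "(E ^^ 0) x z" using gd_holds[OF g x z(1)] z(3) by simp
    then have "x = z" by simp
    moreover have "\<not> E z z" using g unfolding simple_connected_graph_def by blast
    ultimately show "z \<in> {}" using z(2) by simp
  qed
  show ?thesis using aa by (simp only: emp card.empty)
qed

lemma kh_Suc:
  "kh b c (Suc i) = real (b 0) * (\<Prod>j=1..i. real (b j)) / ((\<Prod>j=1..i. real (c j)) * real (c (Suc i)))"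
proof -
  have "(\<Prod>j<Suc i. real (b j)) = real (b 0) * (\<Prod>j<i. real (b (Suc j)))"
    by (rule prod.lessThan_Suc_shift)
  moreover have "(\<Prod>j=1..i. real (b j)) = (\<Prod>j<i. real (b (Suc j)))"
    by (simp add: prod.atLeast1_atMost_eq)
  ultimately show ?thesis unfolding kh_def by simp
qed

theorem lemma3p2:
  fixes V :: "'v set" and E :: "'v \<Rightarrow> 'v \<Rightarrow> bool"
    and D :: nat and a b c :: "nat \<Rightarrow> nat"
    and \<sigma>s \<rho>s :: "nat \<Rightarrow> real"
  assumes "distance_regular V E D a b c"
    and "D \<ge> 3"
    and "\<exists>\<theta>. pseudo_cosine_seq D a b c \<theta> \<sigma>s"
    and "\<exists>\<theta>. pseudo_cosine_seq D a b c \<theta> \<rho>s"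
    and "i \<le> D - 1"
  shows "(\<sigma>s 1 - \<rho>s 1) * (\<Sum>h=0..i. kh b c h * \<sigma>s h * \<rho>s h)
         = (\<Prod>j=1..i. real (b j)) / (\<Prod>j=1..i. real (c j))
           * (\<sigma>s (i + 1) * \<rho>s i - \<sigma>s i * \<rho>s (i + 1))"
proof -
  obtain t1 where p1: "pseudo_cosine_seq D a b c t1 \<sigma>s" using assms(3) by blast
  obtain t2 where p2: "pseudo_cosine_seq D a b c t2 \<rho>s" using assms(4) by blast
  have A0: "a 0 = 0" using a0[OF assms(1)] .
  have s0: "\<sigma>s 0 = 1" and r0: "\<rho>s 0 = 1" using p1 p2 unfolding pseudo_cosine_seq_def by auto
  have R1: "\<And>i. i + 1 \<le> D \<Longrightarrow> real (c i) * (if i = 0 then 0 else \<sigma>s (i - 1)) + real (a i) * \<sigma>s i + real (b i) * \<sigma>s (i + 1) = t1 * \<sigma>s i"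
    using p1 unfolding pseudo_cosine_seq_def by blast
  have R2: "\<And>i. i + 1 \<le> D \<Longrightarrow> real (c i) * (if i = 0 then 0 else \<rho>s (i - 1)) + real (a i) * \<rho>s i + real (b i) * \<rho>s (i + 1) = t2 * \<rho>s i"
    using p2 unfolding pseudo_cosine_seq_def by blast
  have T1: "t1 = real (b 0) * \<sigma>s 1" using R1[of 0] assms(2) A0 s0 by simp
  have T2: "t2 = real (b 0) * \<rho>s 1" using R2[of 0] assms(2) A0 r0 by simp
  define P where "P i = (\<Prod>j=1..i. real (b j)) / (\<Prod>j=1..i. real (c j))" for i
  define W where "W i = \<sigma>s (i + 1) * \<rho>s i - \<sigma>s i * \<rho>s (i + 1)" for i
  have "i \<le> D - 1 \<Longrightarrow> (\<sigma>s 1 - \<rho>s 1) * (\<Sum>h=0..i. kh b c h * \<sigma>s h * \<rho>s h) = P i * W i"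
  proof (induction i)
    case 0 then show ?case by (simp add: P_def W_def kh_def s0 r0)
  next
    case (Suc i)
    have cpos: "c (Suc i) > 0" using c_pos[OF assms(1), of "Suc i"] Suc.prems by simp
    have IH: "(\<sigma>s 1 - \<rho>s 1) * (\<Sum>h=0..i. kh b c h * \<sigma>s h * \<rho>s h) = P i * W i"
      using Suc by simp
    have e1: "real (c (Suc i)) * \<sigma>s i + real (a (Suc i)) * \<sigma>s (Suc i) + real (b (Suc i)) * \<sigma>s (Suc (Suc i)) = t1 * \<sigma>s (Suc i)"
      using R1[of "Suc i"] Suc.prems by simp
    have e2: "real (c (Suc i)) * \<rho>s i + real (a (Suc i)) * \<rho>s (Suc i) + real (b (Suc i)) * \<rho>s (Suc (Suc i)) = t2 * \<rho>s (Suc i)"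
      using R2[of "Suc i"] Suc.prems by simp
    have bW: "real (b (Suc i)) * W (Suc i) = (t1 - t2) * \<sigma>s (Suc i) * \<rho>s (Suc i) + real (c (Suc i)) * W i"
    proof -
      have "real (b (Suc i)) * W (Suc i) = (real (b (Suc i)) * \<sigma>s (Suc (Suc i))) * \<rho>s (Suc i) - \<sigma>s (Suc i) * (real (b (Suc i)) * \<rho>s (Suc (Suc i)))"
        by (simp add: W_def algebra_simps)
      also have "\<dots> = (t1 * \<sigma>s (Suc i) - real (c (Suc i)) * \<sigma>s i - real (a (Suc i)) * \<sigma>s (Suc i)) * \<rho>s (Suc i) - \<sigma>s (Suc i) * (t2 * \<rho>s (Suc i) - real (c (Suc i)) * \<rho>s i - real (a (Suc i)) * \<rho>s (Suc i))"
        using e1 e2 by (smt (verit))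
      also have "\<dots> = (t1 - t2) * \<sigma>s (Suc i) * \<rho>s (Suc i) + real (c (Suc i)) * W i"
        by (simp add: W_def algebra_simps)
      finally show ?thesis .
    qed
    have PS: "P (Suc i) = P i * real (b (Suc i)) / real (c (Suc i))"
      by (simp add: P_def)
    have KS: "kh b c (Suc i) = real (b 0) * P i / real (c (Suc i))"
      by (simp add: kh_Suc P_def)
    have "P (Suc i) * W (Suc i) = P i / real (c (Suc i)) * (real (b (Suc i)) * W (Suc i))"
      by (simp add: PS)
    also have "\<dots> = P i / real (c (Suc i)) * ((t1 - t2) * \<sigma>s (Suc i) * \<rho>s (Suc i)) + P i * W i"
      using cpos by (subst bW) (simp add: field_simps)
    also have "\<dots> = (\<sigma>s 1 - \<rho>s 1) * (kh b c (Suc i) * \<sigma>s (Suc i) * \<rho>s (Suc i)) + (\<sigma>s 1 - \<rho>s 1) * (\<Sum>h=0..i. kh b c h * \<sigma>s h * \<rho>s h)"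
    proof -
      have KX: "P i / real (c (Suc i)) * ((t1 - t2) * \<sigma>s (Suc i) * \<rho>s (Suc i)) = (\<sigma>s 1 - \<rho>s 1) * (kh b c (Suc i) * \<sigma>s (Suc i) * \<rho>s (Suc i))"
        by (simp add: KS T1 T2 algebra_simps diff_divide_distrib)
      show ?thesis by (simp only: KX IH)
    qed
    finally show ?case by (simp add: algebra_simps)
  qed
  then show ?thesis using assms(5) by (simp add: P_def W_def)
qed

end
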